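(* There is an absolute constant $C$ such that for every tree $T$ (in the sense of the context), every $j\in\mathcal{J}(T)$ and every $0\le t\le1$, $$|I_T(t,j)|\le (Ct)^{|T^0|/2}\prod_{v\in T^0}\langle\sigma(j,v)\rangle^{-1/2}.$$
   Context: A tree is a finite rooted tree in which every node has either zero or three children; the children of a node $v$ with three children are denoted $v_1,v_2,v_3$. $T^0$ is the set of non-terminal nodes and $T^\infty$ the set of terminal nodes. For nodes, $v<w$ means $v$ is a (strict) descendant of $w$. $\mathcal{J}(T)$ is the set of $j\in\mathbb{Z}^T$ such that for every $v\in T^0$, $j_v=j_{v_1}+j_{v_2}+j_{v_3}$ and either $j_{v_i}\neq j_v$ for all $i=1,2,3$, or $j_{v_1}=-j_{v_2}=j_{v_3}=j_v$. Let $\sigma(n_1,n_2,n_3)=(n_1+n_2+n_3)^3-n_1^3-n_2^3-n_3^3=3(n_1+n_2)(n_2+n_3)(n_3+n_1)$, and for $v\in T^0$, $\sigma(j,v)=\sigma(j_{v_1},j_{v_2},j_{v_3})$. $\langle x\rangle=(1+x^2)^{1/2}$. $\mathcal{R}(T,t)=\{s\in\mathbb{R}_+^{T^0}: 0\le s_v\le s_w\le t\text{ whenever }v<w\}$, $c(j,s)=\prod_{v\in T^0}e^{i\sigma(j,v)s_v}$, and $I_T(t,j)=\int_{\mathcal{R}(T,t)}c(j,s)\,ds$. *)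

theory Defs
  imports "HOL-Analysis.Analysis"
begin

datatype tree = Leaf | Node tree tree tree

text \<open>Nodes are addressed by paths from the root; the children of node v are
  v@[0], v@[1], v@[2] (i.e. v_1, v_2, v_3).\<close>
fun nodes :: "tree \<Rightarrow> nat list set" where
  "nodes Leaf = {[]}"
| "nodes (Node a b c) = insert [] ((\<lambda>p. 0 # p) ` nodes a \<union> (\<lambda>p. 1 # p) ` nodes b
      \<union> (\<lambda>p. 2 # p) ` nodes c)"

fun inodes :: "tree \<Rightarrow> nat list set" where
  "inodes Leaf = {}"
| "inodes (Node a b c) = insert [] ((\<lambda>p. 0 # p) ` inodes a \<union> (\<lambda>p. 1 # p) ` inodes b
      \<union> (\<lambda>p. 2 # p) ` inodes c)"

definition tnodes :: "tree \<Rightarrow> nat list set" where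
  "tnodes T = nodes T - inodes T"

definition desc :: "nat list \<Rightarrow> nat list \<Rightarrow> bool" where
  "desc v w \<longleftrightarrow> (\<exists>u. u \<noteq> [] \<and> v = w @ u)"

definition child :: "nat list \<Rightarrow> nat \<Rightarrow> nat list" where
  "child v i = v @ [i - 1]"

definition JT :: "tree \<Rightarrow> (nat list \<Rightarrow> int) set" where
  "JT T = {j. \<forall>v\<in>inodes T.
      j v = j (child v 1) + j (child v 2) + j (child v 3) \<and>
      ((\<forall>i\<in>{1,2,3}. j (child v i) \<noteq> j v) \<or>
       (j (child v 1) = j v \<and> j (child v 2) = - j v \<and> j (child v 3) = j v))}"

definition sigma3 :: "int \<Rightarrow> int \<Rightarrow> int \<Rightarrow> int" where
  "sigma3 n1 n2 n3 = (n1 + n2 + n3)^3 - n1^3 - n2^3 - n3^3"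

definition sigmaT :: "(nat list \<Rightarrow> int) \<Rightarrow> nat list \<Rightarrow> int" where
  "sigmaT j v = sigma3 (j (child v 1)) (j (child v 2)) (j (child v 3))"

definition jbr :: "real \<Rightarrow> real" where
  "jbr x = sqrt (1 + x^2)"

definition RT :: "tree \<Rightarrow> real \<Rightarrow> (nat list \<Rightarrow> real) set" where
  "RT T t = {s \<in> inodes T \<rightarrow>\<^sub>E UNIV.
      (\<forall>v\<in>inodes T. 0 \<le> s v \<and> s v \<le> t) \<and>
      (\<forall>v\<in>inodes T. \<forall>w\<in>inodes T. desc v w \<longrightarrow> s v \<le> s w)}"

definition cjs :: "tree \<Rightarrow> (nat list \<Rightarrow> int) \<Rightarrow> (nat list \<Rightarrow> real) \<Rightarrow> complex" where
  "cjs T j s = (\<Prod>v\<in>inodes T. exp (\<i> * of_real (of_int (sigmaT j v) * s v)))"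

definition IT :: "tree \<Rightarrow> real \<Rightarrow> (nat list \<Rightarrow> int) \<Rightarrow> complex" where
  "IT T t j = (\<integral>s. indicator (RT T t) s *\<^sub>R cjs T j s
      \<partial>(PiM (inodes T) (\<lambda>_. lborel)))"

end

theory Submission
  imports Defs
begin


datatype ltree = LL | LN real "real \<Rightarrow> complex" nat ltree ltree ltree

definition amp :: "nat \<Rightarrow> (real \<Rightarrow> complex) \<Rightarrow> (real \<Rightarrow> complex) \<Rightarrow> bool" where
  "amp k a a' \<longleftrightarrow> continuous_on {0..1} a' \<and> (\<forall>s\<in>{0..1}. (a has_vector_derivative a' s) (at s within {0..1})
      \<and> norm (a s) \<le> s^k \<and> norm (a' s) \<le> real k * s^(k-1))"

definition ee :: "real \<Rightarrow> real \<Rightarrow> complex" where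
  "ee \<nu> u = exp (\<i> * of_real (\<nu> * u))"

lemma ee_deriv: "(ee \<nu> has_vector_derivative (\<i> * of_real \<nu> * ee \<nu> u)) (at u within S)"
proof -
  have D: "((\<lambda>z. exp (\<i> * of_real \<nu> * z)) has_field_derivative (\<i> * of_real \<nu> * exp (\<i> * of_real \<nu> * of_real u))) (at (of_real u))"
    by (auto intro!: derivative_eq_intros)
  have eq: "ee \<nu> = (\<lambda>x. exp (\<i> * (of_real \<nu> * of_real x)))" by (auto simp: ee_def fun_eq_iff)
  from has_vector_derivative_real_field[OF D] show ?thesis
    unfolding eq by (simp add: mult.assoc)
qed

lemma ee_cont: "continuous_on S (ee \<nu>)"
  unfolding ee_def by (intro continuous_intros)

lemma norm_ee[simp]: "norm (ee \<nu> u) = 1"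
  unfolding ee_def by (simp add: norm_exp_i_times)

lemma ee_add: "ee (\<nu> + \<nu>') u = ee \<nu> u * ee \<nu>' u"
  unfolding ee_def by (simp add: distrib_right exp_add[symmetric] algebra_simps)

lemma amp_cont: "amp k a a' \<Longrightarrow> continuous_on {0..1} a"
  unfolding amp_def continuous_on_eq_continuous_within
  using has_vector_derivative_continuous by blast

lemma amp_const: "amp 0 (\<lambda>_. 1) (\<lambda>_. 0)"
  unfolding amp_def by (auto intro!: derivative_eq_intros)

lemma amp_mult:
  assumes "amp k1 a a1" "amp k2 b b1"
  shows "amp (k1+k2) (\<lambda>s. a s * b s) (\<lambda>s. a s * b1 s + a1 s * b s)"
  unfolding amp_def
proof (intro conjI ballI)
  show "continuous_on {0..1} (\<lambda>s. a s * b1 s + a1 s * b s)"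
    using assms amp_cont[OF assms(1)] amp_cont[OF assms(2)] unfolding amp_def
    by (intro continuous_intros) auto
  fix s :: real assume s: "s \<in> {0..1}"
  show "((\<lambda>s. a s * b s) has_vector_derivative a s * b1 s + a1 s * b s) (at s within {0..1})"
    using assms s unfolding amp_def by (auto intro!: has_vector_derivative_mult)
  have s0: "0 \<le> s" using s by auto
  have A: "norm (a s) \<le> s^k1" "norm (a1 s) \<le> real k1 * s^(k1-1)" "norm (b s) \<le> s^k2" "norm (b1 s) \<le> real k2 * s^(k2-1)"
    using assms s unfolding amp_def by auto
  show "norm (a s * b s) \<le> s^(k1+k2)"
    using A s0 by (simp add: norm_mult power_add mult_mono)
  have e1: "real k1 * s^(k1-1) * s^k2 = real k1 * s^(k1+k2-1)"
    by (cases k1) (auto simp: power_add)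
  have e2: "s^k1 * (real k2 * s^(k2-1)) = real k2 * s^(k1+k2-1)"
    by (cases k2) (auto simp: power_add)
  have "norm (a s * b1 s + a1 s * b s) \<le> norm (a s) * norm (b1 s) + norm (a1 s) * norm (b s)"
    by (metis norm_mult norm_triangle_ineq)
  also have "\<dots> \<le> s^k1 * (real k2 * s^(k2-1)) + real k1 * s^(k1-1) * s^k2"
    using A s0 by (intro add_mono mult_mono) auto
  also have "\<dots> = real k2 * s^(k1+k2-1) + real k1 * s^(k1+k2-1)" by (subst e1, subst e2, rule refl)
  also have "\<dots> = real (k1+k2) * s^(k1+k2-1)" by (simp add: algebra_simps)
  finally show "norm (a s * b1 s + a1 s * b s) \<le> real (k1+k2) * s^(k1+k2-1)" .
qed

lemma ee0[simp]: "ee \<nu> 0 = 1" by (simp add: ee_def)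

lemma cont_ee_mult: "continuous_on {0..1} a \<Longrightarrow> continuous_on {0..1} (\<lambda>u. ee \<nu> u * a u)"
  using ee_cont by (intro continuous_intros) auto

lemma integrable_sub: fixes f :: "real \<Rightarrow> 'a::banach" shows "continuous_on {0..1} f \<Longrightarrow> s \<in> {0..1} \<Longrightarrow> f integrable_on {0..s}"
  by (rule integrable_continuous_interval) (auto elim: continuous_on_subset)

lemma norm_integral_le_const:
  fixes f :: "real \<Rightarrow> complex"
  assumes "f integrable_on {0..s}" "0 \<le> s" "\<And>u. u \<in> {0..s} \<Longrightarrow> norm (f u) \<le> B"
  shows "norm (integral {0..s} f) \<le> s * B"
proof -
  have "norm (integral {0..s} f) \<le> integral {0..s} (\<lambda>_. B)"
    using assms by (intro integral_norm_bound_integral) auto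
  also have "\<dots> = s * B" using assms by simp
  finally show ?thesis .
qed

lemma amp_int:
  assumes "amp k a a'"
  shows "amp (k+1) (\<lambda>s. integral {0..s} (\<lambda>u. ee \<nu> u * a u)) (\<lambda>s. ee \<nu> s * a s)"
  unfolding amp_def
proof (intro conjI ballI)
  have ca: "continuous_on {0..1} (\<lambda>u. ee \<nu> u * a u)" using amp_cont[OF assms] by (rule cont_ee_mult)
  then show "continuous_on {0..1} (\<lambda>u. ee \<nu> u * a u)" .
  fix s :: real assume s: "s \<in> {0..1}"
  show "((\<lambda>s. integral {0..s} (\<lambda>u. ee \<nu> u * a u)) has_vector_derivative ee \<nu> s * a s) (at s within {0..1})"
    using integral_has_vector_derivative[OF ca s] .
  have "norm (integral {0..s} (\<lambda>u. ee \<nu> u * a u)) \<le> s * s^k"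
  proof (rule norm_integral_le_const)
    show "(\<lambda>u. ee \<nu> u * a u) integrable_on {0..s}" using ca s by (rule integrable_sub)
    fix u assume u: "u \<in> {0..s}"
    then have "norm (a u) \<le> u^k" using assms s unfolding amp_def by auto
    also have "\<dots> \<le> s^k" using u by (auto intro: power_mono)
    finally show "norm (ee \<nu> u * a u) \<le> s^k" by (simp add: norm_mult)
  qed (use s in auto)
  then show "norm (integral {0..s} (\<lambda>u. ee \<nu> u * a u)) \<le> s^(k+1)" by (simp add: mult.commute)
  have "norm (a s) \<le> s^k" using assms s unfolding amp_def by auto
  also have "\<dots> \<le> real (k+1) * s^(k+1-1)"
  proof -
    have "0 \<le> real k * s^k" using s by simp
    then show ?thesis by (simp add: algebra_simps)
  qed
  finally show "norm (ee \<nu> s * a s) \<le> real (k+1) * s^(k+1-1)" by (simp add: norm_mult)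
qed

definition gg :: "real \<Rightarrow> (real \<Rightarrow> complex) \<Rightarrow> (real \<Rightarrow> complex) \<Rightarrow> real \<Rightarrow> complex" where
  "gg \<nu> a a' s = a 0 + integral {0..s} (\<lambda>u. ee \<nu> u * a' u)"

lemma ibp:
  assumes "amp k a a'" "\<nu> \<noteq> 0" "s \<in> {0..1}"
  shows "integral {0..s} (\<lambda>u. ee \<nu> u * a u) = (ee \<nu> s * a s - gg \<nu> a a' s) / (\<i> * of_real \<nu>)"
proof -
  have ca: "continuous_on {0..1} (\<lambda>u. ee \<nu> u * a u)" using amp_cont[OF assms(1)] by (rule cont_ee_mult)
  have ca': "continuous_on {0..1} (\<lambda>u. ee \<nu> u * a' u)" using assms(1) unfolding amp_def by (intro cont_ee_mult) auto
  have "((\<lambda>u. ee \<nu> u * a' u + (\<i> * of_real \<nu> * ee \<nu> u) * a u) has_integral (ee \<nu> s * a s - ee \<nu> 0 * a 0)) {0..s}"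
  proof (rule fundamental_theorem_of_calculus)
    show "0 \<le> s" using assms by auto
    fix x assume x: "x \<in> {0..s}"
    then have x1: "x \<in> {0..1}" using assms by auto
    have "(a has_vector_derivative a' x) (at x within {0..1})" using assms(1) x1 unfolding amp_def by auto
    then have "(a has_vector_derivative a' x) (at x within {0..s})"
      by (rule has_vector_derivative_within_subset) (use assms in auto)
    from has_vector_derivative_mult[OF ee_deriv this]
    show "((\<lambda>u. ee \<nu> u * a u) has_vector_derivative ee \<nu> x * a' x + \<i> * complex_of_real \<nu> * ee \<nu> x * a x) (at x within {0..s})" .
  qed
  then have "integral {0..s} (\<lambda>u. ee \<nu> u * a' u + (\<i> * of_real \<nu>) * (ee \<nu> u * a u)) = ee \<nu> s * a s - a 0"
    by (auto dest!: integral_unique simp: mult.assoc)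
  moreover have "integral {0..s} (\<lambda>u. ee \<nu> u * a' u + (\<i> * of_real \<nu>) * (ee \<nu> u * a u))
      = integral {0..s} (\<lambda>u. ee \<nu> u * a' u) + (\<i> * of_real \<nu>) * integral {0..s} (\<lambda>u. ee \<nu> u * a u)"
    using integrable_sub[OF ca assms(3)] integrable_sub[OF ca' assms(3)]
    by (subst integral_add) (auto intro: integrable_on_mult_right)
  ultimately have "(\<i> * of_real \<nu>) * integral {0..s} (\<lambda>u. ee \<nu> u * a u) = ee \<nu> s * a s - gg \<nu> a a' s"
    unfolding gg_def by (simp add: algebra_simps)
  then show ?thesis using assms(2) by (simp add: field_simps)
qed

lemma int_pow:
  assumes "0 \<le> s"
  shows "integral {0..s} (\<lambda>u. real k * u^(k-1)) = s^k - 0^k"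
proof -
  have "((\<lambda>u. real k * u^(k - 1)) has_integral (s^k - 0^k)) {0..s}"
    using assms
    by (intro fundamental_theorem_of_calculus)
       (auto simp: has_real_derivative_iff_has_vector_derivative[symmetric] intro!: DERIV_pow)
  then show ?thesis by (rule integral_unique)
qed

lemma amp_gg:
  assumes "amp k a a'"
  shows "amp k (gg \<nu> a a') (\<lambda>s. ee \<nu> s * a' s)"
  unfolding amp_def
proof (intro conjI ballI)
  have ca': "continuous_on {0..1} (\<lambda>u. ee \<nu> u * a' u)" using assms(1) unfolding amp_def by (intro cont_ee_mult) auto
  then show "continuous_on {0..1} (\<lambda>u. ee \<nu> u * a' u)" .
  fix s :: real assume s: "s \<in> {0..1}"
  show "(gg \<nu> a a' has_vector_derivative ee \<nu> s * a' s) (at s within {0..1})"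
    unfolding gg_def using integral_has_vector_derivative[OF ca' s]
    by (auto intro!: derivative_eq_intros)
  have a0: "norm (a 0) \<le> 0^k" using assms unfolding amp_def by auto
  have "norm (integral {0..s} (\<lambda>u. ee \<nu> u * a' u)) \<le> integral {0..s} (\<lambda>u. real k * u^(k-1))"
  proof (rule integral_norm_bound_integral)
    show "(\<lambda>u. ee \<nu> u * a' u) integrable_on {0..s}" using ca' s by (rule integrable_sub)
    show "(\<lambda>u. real k * u^(k-1)) integrable_on {0..s}"
      by (rule integrable_continuous_interval) (intro continuous_intros)
    fix u assume u: "u \<in> {0..s}"
    then show "norm (ee \<nu> u * a' u) \<le> real k * u^(k-1)" using assms s unfolding amp_def by (auto simp: norm_mult)
  qed
  also have "\<dots> = s^k - 0^k" using s by (intro int_pow) auto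
  finally have "norm (integral {0..s} (\<lambda>u. ee \<nu> u * a' u)) \<le> s^k - 0^k" .
  then show "norm (gg \<nu> a a' s) \<le> s^k" unfolding gg_def using a0
    by (smt (verit) norm_triangle_ineq)
  show "norm (ee \<nu> s * a' s) \<le> real k * s^(k-1)" using assms s unfolding amp_def by (auto simp: norm_mult)
qed




definition qq :: "real \<Rightarrow> real" where "qq x = sqrt (jbr x)"

lemma jbr_ge1: "jbr x \<ge> 1" unfolding jbr_def by simp
lemma jbr_pos: "jbr x > 0" using jbr_ge1[of x] by linarith
lemma qq_ge1: "qq x \<ge> 1" unfolding qq_def using jbr_ge1 by simp
lemma qq_pos: "qq x > 0" using qq_ge1[of x] by linarith
lemma qq_le_jbr: "qq x \<le> jbr x"
proof -
  have "jbr x \<le> jbr x * jbr x" using jbr_ge1[of x] by simp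
  then have "sqrt (jbr x) \<le> sqrt (jbr x * jbr x)" by (rule real_sqrt_le_mono)
  then show ?thesis unfolding qq_def using jbr_pos[of x] by simp
qed
lemma qq_sq: "(qq x)^2 = jbr x" unfolding qq_def using jbr_pos[of x] by simp
lemma qq_4: "(qq x)^4 = 1 + x^2"
proof -
  have "(qq x)^4 = ((qq x)^2)^2" by simp
  also have "\<dots> = 1 + x^2" unfolding qq_sq jbr_def by simp
  finally show ?thesis .
qed

lemma jbr_le: "\<bar>y\<bar> \<ge> 1 \<Longrightarrow> jbr y \<le> 3/2 * \<bar>y\<bar>"
proof -
  assume a: "\<bar>y\<bar> \<ge> 1"
  have "1 \<le> y^2" using a by (metis abs_le_square_iff abs_one one_power2 power2_abs)
  moreover have "(3/2 * \<bar>y\<bar>)^2 = 9/4 * y^2" by (cases "y \<ge> 0") (auto simp: power2_eq_square)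
  ultimately have "1 + y^2 \<le> (3/2 * \<bar>y\<bar>)^2" by linarith
  then show ?thesis unfolding jbr_def using a by (intro real_le_lsqrt) auto
qed

lemma qq_small: "\<bar>y\<bar> \<le> 1 \<Longrightarrow> qq y \<le> 2"
proof -
  assume "\<bar>y\<bar> \<le> 1"
  then have "y^2 \<le> 1" by (simp add: abs_square_le_1)
  then have "jbr y \<le> 2" unfolding jbr_def by (intro real_le_lsqrt) auto
  then show ?thesis using qq_le_jbr[of y] by linarith
qed

lemma peetre: "qq x \<le> 2 * qq (x+y) * qq y"
proof -
  have e: "2*(x+y)^2 + 2*y^2 - x^2 = (x+2*y)^2" by (simp add: power2_eq_square algebra_simps)
  have "x^2 \<le> 2*(x+y)^2 + 2*y^2" using e zero_le_power2[of "x+2*y"] by linarith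
  moreover have "\<And>a b c::real. 0 \<le> a \<Longrightarrow> 0 \<le> b \<Longrightarrow> c \<le> 2*a + 2*b \<Longrightarrow> 1 + c \<le> 16*((1+a)*(1+b))"
  proof -
    fix a b c :: real assume h: "0 \<le> a" "0 \<le> b" "c \<le> 2*a + 2*b"
    have "(1+a)*(1+b) = 1 + a + b + a*b" by (simp add: algebra_simps)
    moreover have "0 \<le> a*b" using h by simp
    ultimately show "1 + c \<le> 16*((1+a)*(1+b))" using h by linarith
  qed
  ultimately have "1 + x^2 \<le> 16 * ((1 + (x+y)^2) * (1 + y^2))" by simp
  moreover have eq: "(2 * qq (x+y) * qq y)^4 = 16 * ((1 + (x+y)^2) * (1 + y^2))"
    unfolding power_mult_distrib qq_4 by simp
  ultimately have "(qq x)^4 \<le> (2 * qq (x+y) * qq y)^4"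
    by (subst eq, subst qq_4)
  moreover have "0 \<le> qq x" "0 \<le> 2 * qq (x+y) * qq y" using qq_pos by (auto simp: less_imp_le)
  ultimately show ?thesis using power_mono_iff[of "qq x" "2 * qq (x+y) * qq y" 4] by simp
qed

lemma key_ineq:
  assumes "\<bar>y\<bar> \<ge> 1"
  shows "(1 / qq (x+y) + 1 / qq x) / \<bar>y\<bar> \<le> 5 / (qq x * qq y)"
proof -
  have p: "qq x > 0" "qq y > 0" "qq (x+y) > 0" "\<bar>y\<bar> > 0" using qq_pos assms by auto
  have A: "qq x * qq y / qq (x+y) \<le> 2 * (qq y)^2"
    using peetre[of x y] p by (simp add: divide_le_eq power2_eq_square algebra_simps)
  have B: "2 * (qq y)^2 \<le> 3 * \<bar>y\<bar>" using jbr_le[OF assms] qq_sq[of y] by linarith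
  have C: "qq y \<le> 3/2 * \<bar>y\<bar>" using jbr_le[OF assms] qq_le_jbr[of y] by linarith
  have "(1 / qq (x+y) + 1 / qq x) / \<bar>y\<bar> = (qq x * qq y / qq (x+y) + qq y) / (\<bar>y\<bar> * (qq x * qq y))"
    using p by (simp add: field_simps)
  also have "\<dots> \<le> (5 * \<bar>y\<bar>) / (\<bar>y\<bar> * (qq x * qq y))"
    using A B C p by (intro divide_right_mono) auto
  also have "\<dots> = 5 / (qq x * qq y)" using p by simp
  finally show ?thesis .
qed




fun wft :: "ltree \<Rightarrow> bool" where
  "wft LL = True"
| "wft (LN \<nu> a k x y z) = ((\<exists>a'. amp k a a') \<and> wft x \<and> wft y \<and> wft z)"

fun J :: "ltree \<Rightarrow> real \<Rightarrow> complex" where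
  "J LL T = 1"
| "J (LN \<nu> a k x y z) T = integral {0..T} (\<lambda>s. ee \<nu> s * a s * J x s * J y s * J z s)"

fun sz :: "ltree \<Rightarrow> nat" where
  "sz LL = 0"
| "sz (LN \<nu> a k x y z) = Suc (sz x + sz y + sz z)"

fun Bd :: "real \<Rightarrow> ltree \<Rightarrow> real" where
  "Bd T LL = 1"
| "Bd T (LN \<nu> a k x y z) = 5 * T^(k+1) / qq (T*\<nu>) * Bd T x * Bd T y * Bd T z"

lemma Bd_nonneg: "0 \<le> T \<Longrightarrow> 0 \<le> Bd T L"
  by (induction L) (auto intro!: mult_nonneg_nonneg divide_nonneg_pos qq_pos)

lemma J_cont: "wft L \<Longrightarrow> continuous_on {0..1} (J L)"
proof (induction L)
  case LL then show ?case by simp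
next
  case (LN \<nu> a k x y z)
  then obtain a' where am: "amp k a a'" by auto
  have c: "continuous_on {0..1} (\<lambda>s. ee \<nu> s * a s * J x s * J y s * J z s)"
    using LN amp_cont[OF am] ee_cont by (intro continuous_intros) auto
  show ?case unfolding J.simps
    by (rule indefinite_integral_continuous_1, rule integrable_continuous_interval, rule c)
qed

lemma J_base:
  assumes w: "wft (LN \<nu> a k LL LL LL)" and T: "0 \<le> T" "T \<le> 1"
  shows "norm (J (LN \<nu> a k LL LL LL) T) \<le> Bd T (LN \<nu> a k LL LL LL)"
proof -
  obtain a' where am: "amp k a a'" using w by auto
  have JJ: "J (LN \<nu> a k LL LL LL) T = integral {0..T} (\<lambda>u. ee \<nu> u * a u)" by simp
  have BB: "Bd T (LN \<nu> a k LL LL LL) = T^k * (5 * T / qq (T*\<nu>))" by simp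
  have ca: "continuous_on {0..1} (\<lambda>u. ee \<nu> u * a u)" using amp_cont[OF am] by (rule cont_ee_mult)
  have T1: "T \<in> {0..1}" using T by auto
  show ?thesis
  proof (cases "\<bar>T*\<nu>\<bar> < 1")
    case True
    have "norm (integral {0..T} (\<lambda>u. ee \<nu> u * a u)) \<le> T * T^k"
    proof (rule norm_integral_le_const)
      show "(\<lambda>u. ee \<nu> u * a u) integrable_on {0..T}" using ca T1 by (rule integrable_sub)
      fix u assume u: "u \<in> {0..T}"
      then have "norm (a u) \<le> u^k" using am T unfolding amp_def by auto
      also have "\<dots> \<le> T^k" using u by (auto intro: power_mono)
      finally show "norm (ee \<nu> u * a u) \<le> T^k" by (simp add: norm_mult)
    qed (use T in auto)
    moreover have "T \<le> 5 * T / qq (T*\<nu>)"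
    proof -
      have "T * qq (T*\<nu>) \<le> T * 5" using qq_small[of "T*\<nu>"] True T by (intro mult_left_mono) auto
      then show ?thesis using qq_pos[of "T*\<nu>"] by (simp add: le_divide_eq mult.commute)
    qed
    ultimately show ?thesis unfolding JJ BB using T
      by (smt (verit) mult.commute mult_left_mono zero_le_power)
  next
    case False
    then have Tp: "T > 0" and nz: "\<nu> \<noteq> 0" using T by (auto simp: not_less le_less)
    have "integral {0..T} (\<lambda>u. ee \<nu> u * a u) = (ee \<nu> T * a T - gg \<nu> a a' T) / (\<i> * of_real \<nu>)"
      by (rule ibp[OF am nz T1])
    moreover have "norm (ee \<nu> T * a T - gg \<nu> a a' T) \<le> T^k + T^k"
    proof -
      have "norm (a T) \<le> T^k" using am T1 unfolding amp_def by auto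
      moreover have "norm (gg \<nu> a a' T) \<le> T^k" using amp_gg[OF am, of \<nu>] T1 unfolding amp_def by auto
      moreover have "norm (ee \<nu> T * a T - gg \<nu> a a' T) \<le> norm (ee \<nu> T * a T) + norm (gg \<nu> a a' T)"
        by (rule norm_triangle_ineq4)
      ultimately show ?thesis by (simp add: norm_mult)
    qed
    ultimately have "norm (J (LN \<nu> a k LL LL LL) T) \<le> (2 * T^k) / \<bar>\<nu>\<bar>"
      unfolding JJ by (simp add: norm_divide norm_mult divide_right_mono)
    also have "\<dots> = T^k * (2 * T / \<bar>T*\<nu>\<bar>)" using Tp by (simp add: abs_mult)
    also have "\<dots> \<le> T^k * (5 * T / qq (T*\<nu>))"
    proof (rule mult_left_mono)
      have "qq (T*\<nu>) \<le> 3/2 * \<bar>T*\<nu>\<bar>" using qq_le_jbr[of "T*\<nu>"] jbr_le[of "T*\<nu>"] False by linarith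
      then show "2 * T / \<bar>T*\<nu>\<bar> \<le> 5 * T / qq (T*\<nu>)"
        using Tp False qq_pos[of "T*\<nu>"] by (simp add: divide_simps)
    qed (use T in auto)
    finally show ?thesis unfolding BB .
  qed
qed

definition peelable :: "real \<Rightarrow> ltree \<Rightarrow> bool" where
  "peelable T L \<longleftrightarrow> (\<exists>c1 L1 c2 L2. wft L1 \<and> wft L2 \<and> sz L1 < sz L \<and> sz L2 < sz L \<and>
     (\<forall>s\<in>{0..T}. J L s = c1 * J L1 s + c2 * J L2 s) \<and> norm c1 * Bd T L1 + norm c2 * Bd T L2 \<le> Bd T L)"

lemma integral_lin2:
  fixes f g :: "real \<Rightarrow> complex"
  assumes "continuous_on {0..1} f" "continuous_on {0..1} g" "s \<in> {0..1}"
  shows "integral {0..s} (\<lambda>u. c1 * f u + c2 * g u) = c1 * integral {0..s} f + c2 * integral {0..s} g"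
proof -
  have "f integrable_on {0..s}" "g integrable_on {0..s}" using assms integrable_sub by auto
  then show ?thesis by (subst integral_add) (auto intro: integrable_on_mult_right)
qed

lemma peel_rot:
  assumes "peelable T (LN \<nu> a k y z x)"
  shows "peelable T (LN \<nu> a k x y z)"
proof -
  have "J (LN \<nu> a k x y z) s = J (LN \<nu> a k y z x) s" for s
    by (simp add: mult_ac)
  moreover have "sz (LN \<nu> a k x y z) = sz (LN \<nu> a k y z x)" by simp
  moreover have "Bd T (LN \<nu> a k x y z) = Bd T (LN \<nu> a k y z x)" by simp
  ultimately show ?thesis using assms unfolding peelable_def by metis
qed

lemma step_rec:
  assumes w: "wft (LN \<nu> a k x y z)" and T: "0 \<le> T" "T \<le> 1" and px: "peelable T x"
  shows "peelable T (LN \<nu> a k x y z)"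
proof -
  obtain c1 x1 c2 x2 where p: "wft x1" "wft x2" "sz x1 < sz x" "sz x2 < sz x"
    "\<forall>s\<in>{0..T}. J x s = c1 * J x1 s + c2 * J x2 s" "norm c1 * Bd T x1 + norm c2 * Bd T x2 \<le> Bd T x"
    using px unfolding peelable_def by blast
  obtain a' where am: "amp k a a'" using w by auto
  let ?L1 = "LN \<nu> a k x1 y z" and ?L2 = "LN \<nu> a k x2 y z"
  have w1: "wft ?L1" "wft ?L2" using w p am by auto
  have cf: "continuous_on {0..1} (\<lambda>u. ee \<nu> u * a u * J x' u * J y u * J z u)" if "wft x'" for x'
    using w that amp_cont[OF am] ee_cont J_cont by (intro continuous_intros) auto
  have eq: "J (LN \<nu> a k x y z) s = c1 * J ?L1 s + c2 * J ?L2 s" if s: "s \<in> {0..T}" for s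
  proof -
    have "J (LN \<nu> a k x y z) s = integral {0..s} (\<lambda>u. c1 * (ee \<nu> u * a u * J x1 u * J y u * J z u)
         + c2 * (ee \<nu> u * a u * J x2 u * J y u * J z u))"
      unfolding J.simps
    proof (rule integral_cong)
      fix u assume "u \<in> {0..s}"
      then have "u \<in> {0..T}" using s by auto
      then show "ee \<nu> u * a u * J x u * J y u * J z u = c1 * (ee \<nu> u * a u * J x1 u * J y u * J z u)
         + c2 * (ee \<nu> u * a u * J x2 u * J y u * J z u)" using p(5) by (simp add: algebra_simps)
    qed
    also have "\<dots> = c1 * J ?L1 s + c2 * J ?L2 s"
      unfolding J.simps using cf[OF p(1)] cf[OF p(2)] s T by (intro integral_lin2) auto
    finally show ?thesis .
  qed
  define R where "R = 5 * T^(k+1) / qq (T*\<nu>) * Bd T y * Bd T z"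
  have R0: "0 \<le> R" unfolding R_def using T Bd_nonneg qq_pos by (auto intro!: mult_nonneg_nonneg divide_nonneg_pos)
  have B: "Bd T (LN \<nu> a k x' y z) = R * Bd T x'" for x' unfolding R_def by (simp add: mult_ac)
  have "norm c1 * Bd T ?L1 + norm c2 * Bd T ?L2 = R * (norm c1 * Bd T x1 + norm c2 * Bd T x2)"
    unfolding B by (simp add: algebra_simps)
  also have "\<dots> \<le> R * Bd T x" using p(6) R0 by (rule mult_left_mono)
  finally have "norm c1 * Bd T ?L1 + norm c2 * Bd T ?L2 \<le> Bd T (LN \<nu> a k x y z)" unfolding B .
  then show ?thesis unfolding peelable_def using w1 p eq
    by (intro exI[of _ c1] exI[of _ ?L1] exI[of _ c2] exI[of _ ?L2]) auto
qed

lemma step_first: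
  assumes w: "wft (LN \<nu> a k (LN \<nu>' b k' LL LL LL) y z)" and T: "0 \<le> T" "T \<le> 1"
  shows "peelable T (LN \<nu> a k (LN \<nu>' b k' LL LL LL) y z)"
proof -
  let ?X = "LN \<nu>' b k' LL LL LL"
  let ?L = "LN \<nu> a k ?X y z"
  obtain a' where am: "amp k a a'" using w by auto
  obtain b' where bm: "amp k' b b'" using w by auto
  have wy: "wft y" "wft z" using w by auto
  define h where "h s = integral {0..s} (\<lambda>u. ee \<nu>' u * b u)" for s
  have JX: "J ?X s = h s" for s unfolding h_def by simp
  define R where "R = 5 * T^(k+1) / qq (T*\<nu>) * Bd T y * Bd T z"
  have R0: "0 \<le> R" unfolding R_def using T Bd_nonneg qq_pos by (auto intro!: mult_nonneg_nonneg divide_nonneg_pos)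
  have BL: "Bd T ?L = R * (5 * T^(k'+1) / qq (T*\<nu>'))" unfolding R_def by (simp add: mult_ac)
  show ?thesis
  proof (cases "\<bar>T*\<nu>'\<bar> < 1")
    case True
    let ?L1 = "LN \<nu> (\<lambda>s. a s * h s) (k + (k'+1)) LL y z"
    have w1: "wft ?L1" using amp_mult[OF am amp_int[OF bm, of \<nu>']] wy unfolding h_def by auto
    have eq: "J ?L s = 1 * J ?L1 s + 0 * J ?L1 s" for s
      unfolding J.simps h_def by (simp add: mult_ac)
    have "Bd T ?L1 = R * T^(k'+1)" unfolding R_def by (simp add: mult_ac power_add)
    also have "\<dots> \<le> R * (5 * T^(k'+1) / qq (T*\<nu>'))"
    proof (rule mult_left_mono[OF _ R0])
      have "T^(k'+1) * qq (T*\<nu>') \<le> T^(k'+1) * 5" using qq_small[of "T*\<nu>'"] True T by (intro mult_left_mono) auto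
      then show "T^(k'+1) \<le> 5 * T^(k'+1) / qq (T*\<nu>')" using qq_pos[of "T*\<nu>'"] by (simp add: le_divide_eq mult.commute)
    qed
    finally have "norm (1::complex) * Bd T ?L1 + norm (0::complex) * Bd T ?L1 \<le> Bd T ?L" unfolding BL by simp
    then show ?thesis unfolding peelable_def using w1 eq
      by (intro exI[of _ 1] exI[of _ ?L1] exI[of _ 0] exI[of _ ?L1]) auto
  next
    case False
    then have Tp: "T > 0" and nz: "\<nu>' \<noteq> 0" using T by (auto simp: not_less le_less)
    define c where "c = 1 / (\<i> * complex_of_real \<nu>')"
    let ?L1 = "LN (\<nu>+\<nu>') (\<lambda>s. a s * b s) (k + k') LL y z"
    let ?L2 = "LN \<nu> (\<lambda>s. a s * gg \<nu>' b b' s) (k + k') LL y z"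
    have w1: "wft ?L1" using amp_mult[OF am bm] wy by auto
    have w2: "wft ?L2" using amp_mult[OF am amp_gg[OF bm, of \<nu>']] wy by auto
    have c1: "continuous_on {0..1} (\<lambda>u. ee (\<nu>+\<nu>') u * (a u * b u) * J LL u * J y u * J z u)"
      using wy amp_cont[OF am] amp_cont[OF bm] ee_cont J_cont by (intro continuous_intros) auto
    have c2: "continuous_on {0..1} (\<lambda>u. ee \<nu> u * (a u * gg \<nu>' b b' u) * J LL u * J y u * J z u)"
      using wy amp_cont[OF am] amp_cont[OF amp_gg[OF bm, of \<nu>']] ee_cont J_cont by (intro continuous_intros) auto
    have eq: "J ?L s = c * J ?L1 s + (-c) * J ?L2 s" if s: "s \<in> {0..T}" for s
    proof -
      have "J ?L s = integral {0..s} (\<lambda>u. c * (ee (\<nu>+\<nu>') u * (a u * b u) * J LL u * J y u * J z u)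
         + (-c) * (ee \<nu> u * (a u * gg \<nu>' b b' u) * J LL u * J y u * J z u))"
        unfolding J.simps(2)[of \<nu> a k ?X] JX
      proof (rule integral_cong)
        fix u assume "u \<in> {0..s}"
        then have u: "u \<in> {0..1}" using s T by auto
        have hu: "h u = (ee \<nu>' u * b u - gg \<nu>' b b' u) / (\<i> * of_real \<nu>')"
          unfolding h_def by (rule ibp[OF bm nz u])
        show "ee \<nu> u * a u * h u * J y u * J z u = c * (ee (\<nu>+\<nu>') u * (a u * b u) * J LL u * J y u * J z u)
         + (-c) * (ee \<nu> u * (a u * gg \<nu>' b b' u) * J LL u * J y u * J z u)"
          unfolding hu c_def ee_add using nz by (simp add: field_simps)
      qed
      also have "\<dots> = c * J ?L1 s + (-c) * J ?L2 s"
        unfolding J.simps(2)[of "\<nu>+\<nu>'"] J.simps(2)[of \<nu> "\<lambda>s. a s * gg \<nu>' b b' s"]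
        using c1 c2 s T by (intro integral_lin2) (auto simp: mult_ac)
      finally show ?thesis .
    qed
    have nc: "norm c = T / \<bar>T*\<nu>'\<bar>" "norm (-c) = T / \<bar>T*\<nu>'\<bar>" unfolding c_def using Tp
      by (auto simp: norm_divide norm_mult abs_mult)
    define W where "W = 5 * T^(k+k') * Bd T y * Bd T z"
    have W0: "0 \<le> W" unfolding W_def using T Bd_nonneg by auto
    have B1: "Bd T ?L1 = W * T / qq (T*\<nu> + T*\<nu>')" unfolding W_def by (simp add: distrib_left mult_ac)
    have B2: "Bd T ?L2 = W * T / qq (T*\<nu>)" unfolding W_def by (simp add: mult_ac)
    have BL2: "Bd T ?L = W * (T * T) * (5 / (qq (T*\<nu>) * qq (T*\<nu>')))"
      unfolding BL R_def W_def by (simp add: mult_ac power_add)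
    have "norm c * Bd T ?L1 + norm (-c) * Bd T ?L2
        = W * (T * T) * ((1 / qq (T*\<nu> + T*\<nu>') + 1 / qq (T*\<nu>)) / \<bar>T*\<nu>'\<bar>)"
    proof -
      have "qq (T*\<nu>) \<noteq> 0" "qq (T*\<nu> + T*\<nu>') \<noteq> 0" "\<bar>T*\<nu>'\<bar> \<noteq> 0"
        using qq_pos[of "T*\<nu>"] qq_pos[of "T*\<nu> + T*\<nu>'"] False by auto
      then show ?thesis unfolding nc B1 B2 by (simp add: field_simps)
    qed
    also have "\<dots> \<le> W * (T * T) * (5 / (qq (T*\<nu>) * qq (T*\<nu>')))"
      using key_ineq[of "T*\<nu>'" "T*\<nu>"] False W0 T by (intro mult_left_mono) auto
    finally have "norm c * Bd T ?L1 + norm (-c) * Bd T ?L2 \<le> Bd T ?L" unfolding BL2 .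
    then show ?thesis unfolding peelable_def using w1 w2 eq
      by (intro exI[of _ c] exI[of _ ?L1] exI[of _ "-c"] exI[of _ ?L2]) auto
  qed
qed

lemma sz_0_iff: "sz L = 0 \<longleftrightarrow> L = LL" by (cases L) auto

lemma first_child:
  assumes w: "wft (LN \<nu> a k x y z)" and T: "0 \<le> T" "T \<le> 1" and x: "x \<noteq> LL"
    and IH: "2 \<le> sz x \<Longrightarrow> peelable T x"
  shows "peelable T (LN \<nu> a k x y z)"
proof -
  obtain \<nu>' b k' x1 x2 x3 where xe: "x = LN \<nu>' b k' x1 x2 x3" using x by (cases x) auto
  show ?thesis
  proof (cases "2 \<le> sz x")
    case True then show ?thesis using step_rec[OF w T IH] by simp
  next
    case False
    then have "x1 = LL" "x2 = LL" "x3 = LL" unfolding xe by (auto simp: sz_0_iff[symmetric])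
    then show ?thesis using step_first[OF _ T] w xe by simp
  qed
qed

lemma wf_rot: "wft (LN \<nu> a k x y z) \<Longrightarrow> wft (LN \<nu> a k y z x)" by auto

lemma peel: "wft L \<Longrightarrow> 2 \<le> sz L \<Longrightarrow> 0 \<le> T \<Longrightarrow> T \<le> 1 \<Longrightarrow> peelable T L"
proof (induction L)
  case LL then show ?case by simp
next
  case (LN \<nu> a k x y z)
  show ?case
  proof (cases "x \<noteq> LL")
    case True
    then show ?thesis using first_child[OF LN.prems(1,3,4)] LN by auto
  next
    case x: False
    show ?thesis
    proof (cases "y \<noteq> LL")
      case True
      have "peelable T (LN \<nu> a k y z x)"
        using first_child[OF wf_rot[OF LN.prems(1)] LN.prems(3,4) True] LN by auto
      then show ?thesis by (rule peel_rot)
    next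
      case y: False
      then have z: "z \<noteq> LL" using x LN.prems(2) by auto
      have "peelable T (LN \<nu> a k z x y)"
        using first_child[OF wf_rot[OF wf_rot[OF LN.prems(1)]] LN.prems(3,4) z] LN by auto
      then have "peelable T (LN \<nu> a k y z x)" by (rule peel_rot)
      then show ?thesis by (rule peel_rot)
    qed
  qed
qed

lemma J_bound: "wft L \<Longrightarrow> 0 \<le> T \<Longrightarrow> T \<le> 1 \<Longrightarrow> norm (J L T) \<le> Bd T L"
proof (induction "sz L" arbitrary: L rule: less_induct)
  case less
  show ?case
  proof (cases "2 \<le> sz L")
    case True
    obtain c1 L1 c2 L2 where p: "wft L1" "wft L2" "sz L1 < sz L" "sz L2 < sz L"
      "\<forall>s\<in>{0..T}. J L s = c1 * J L1 s + c2 * J L2 s" "norm c1 * Bd T L1 + norm c2 * Bd T L2 \<le> Bd T L"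
      using peel[OF less.prems(1) True less.prems(2,3)] unfolding peelable_def by blast
    have "norm (J L T) = norm (c1 * J L1 T + c2 * J L2 T)" using p(5) less.prems by auto
    also have "\<dots> \<le> norm c1 * norm (J L1 T) + norm c2 * norm (J L2 T)"
      by (metis norm_mult norm_triangle_ineq)
    also have "\<dots> \<le> norm c1 * Bd T L1 + norm c2 * Bd T L2"
      using less.hyps[OF p(3) p(1) less.prems(2,3)] less.hyps[OF p(4) p(2) less.prems(2,3)]
      by (intro add_mono mult_left_mono) auto
    finally show ?thesis using p(6) by linarith
  next
    case False
    show ?thesis
    proof (cases L)
      case LL then show ?thesis by simp
    next
      case (LN \<nu> a k x y z)
      then have "x = LL" "y = LL" "z = LL" using False by (auto simp: sz_0_iff[symmetric])
      then show ?thesis using J_base less.prems LN by simp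
    qed
  qed
qed




abbreviation LB :: "nat list set \<Rightarrow> (nat list \<Rightarrow> real) measure" where
  "LB I \<equiv> PiM I (\<lambda>_. lborel)"

definition RR :: "nat list set \<Rightarrow> real \<Rightarrow> (nat list \<Rightarrow> real) set" where
  "RR I t = {s \<in> I \<rightarrow>\<^sub>E UNIV. (\<forall>v\<in>I. 0 \<le> s v \<and> s v \<le> t) \<and> (\<forall>v\<in>I. \<forall>w\<in>I. desc v w \<longrightarrow> s v \<le> s w)}"

definition CC :: "(nat list \<Rightarrow> int) \<Rightarrow> nat list set \<Rightarrow> (nat list \<Rightarrow> real) \<Rightarrow> complex" where
  "CC j I s = (\<Prod>v\<in>I. exp (\<i> * of_real (of_int (sigmaT j v) * s v)))"

definition FF :: "(nat list \<Rightarrow> int) \<Rightarrow> nat list set \<Rightarrow> real \<Rightarrow> (nat list \<Rightarrow> real) \<Rightarrow> complex" where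
  "FF j I u s = indicator (RR I u) s *\<^sub>R CC j I s"

definition II :: "(nat list \<Rightarrow> int) \<Rightarrow> nat list set \<Rightarrow> real \<Rightarrow> complex" where
  "II j I t = (\<integral>s. FF j I t s \<partial>LB I)"

lemma IT_II: "IT T t j = II j (inodes T) t"
  unfolding IT_def II_def FF_def RT_def RR_def CC_def cjs_def ..

lemma space_LB: "space (LB I) = I \<rightarrow>\<^sub>E UNIV" by (simp add: space_PiM)

lemma RR_sets: assumes "finite I" shows "RR I t \<in> sets (LB I)"
proof -
  have "RR I t = {s \<in> space (LB I). (\<forall>v\<in>I. 0 \<le> s v \<and> s v \<le> t) \<and> (\<forall>v\<in>I. \<forall>w\<in>I. desc v w \<longrightarrow> s v \<le> s w)}"
    unfolding RR_def space_LB ..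
  also have "\<dots> \<in> sets (LB I)"
    using assms by measurable (auto simp: pred_def intro!: borel_measurable_le measurable_component_singleton)
  finally show ?thesis .
qed

lemma CC_meas: "CC j I \<in> borel_measurable (LB I)"
  unfolding CC_def by measurable

lemma norm_CC: "norm (CC j I s) = 1"
  unfolding CC_def by (simp add: prod_norm[symmetric] norm_exp_i_times del: prod_norm)

lemma FF_meas: "finite I \<Longrightarrow> FF j I u \<in> borel_measurable (LB I)"
  unfolding FF_def using RR_sets CC_meas by measurable

lemma FF_box: "norm (FF j I u s) \<le> indicator (PiE I (\<lambda>_. {0..\<bar>u\<bar>})) s"
proof (cases "s \<in> RR I u")
  case True
  then have "s \<in> PiE I (\<lambda>_. {0..\<bar>u\<bar>})" unfolding RR_def by (auto simp: PiE_def Pi_def)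
  then show ?thesis using True unfolding FF_def by (simp add: norm_CC)
qed (simp add: FF_def)

interpretation PL: product_sigma_finite "\<lambda>_::nat list. lborel :: real measure"
  by (simp add: product_sigma_finite_def lborel.sigma_finite_measure_axioms)

lemma integrable_box:
  fixes f :: "(nat list \<Rightarrow> real) \<Rightarrow> complex"
  assumes I: "finite I" and f: "f \<in> borel_measurable (LB I)"
    and b: "\<And>s. s \<in> space (LB I) \<Longrightarrow> norm (f s) \<le> indicator (PiE I (\<lambda>_. {0..c})) s"
  shows "integrable (LB I) f"
proof (rule Bochner_Integration.integrable_bound)
  have S: "PiE I (\<lambda>_. {0..c}) \<in> sets (LB I)" using I by (intro sets_PiM_I_finite) auto
  have "emeasure (LB I) (PiE I (\<lambda>_. {0..c})) = (\<Prod>i\<in>I. emeasure lborel {0..c})"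
    using I by (intro PL.emeasure_PiM) auto
  also have "\<dots> < \<infinity>" by (simp add: less_top[symmetric] power_eq_top_ennreal emeasure_lborel_Icc_eq)
  finally have "emeasure (LB I) (PiE I (\<lambda>_. {0..c})) < \<infinity>" .
  then show "integrable (LB I) (indicator (PiE I (\<lambda>_. {0..c})) :: _ \<Rightarrow> real)"
    using S by (simp add: integrable_indicator_iff sets.Int_space_eq2)
  show "f \<in> borel_measurable (LB I)" by fact
  show "AE x in LB I. norm (f x) \<le> norm (indicator (PiE I (\<lambda>_. {0..c})) x :: real)"
    using b by (auto intro!: AE_I2)
qed

lemma restrict_space_LB: "x \<in> space (LB I) \<Longrightarrow> restrict x I = x"
  unfolding space_LB by (simp add: PiE_restrict)

lemma box_comb:
  assumes "s \<in> space (LB (I \<union> K))"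
  shows "indicator (PiE I (\<lambda>_. {0..c})) (restrict s I) * indicator (PiE K (\<lambda>_. {0..c})) (restrict s K)
     \<le> (indicator (PiE (I \<union> K) (\<lambda>_. {0..c})) s :: real)"
proof (cases "restrict s I \<in> PiE I (\<lambda>_. {0..c}) \<and> restrict s K \<in> PiE K (\<lambda>_. {0..c})")
  case True
  then have "s \<in> PiE (I \<union> K) (\<lambda>_. {0..c})" using assms unfolding space_LB
    by (auto simp: PiE_def Pi_def restrict_def)
  then show ?thesis using True by simp
next
  case False
  then have "indicator (PiE I (\<lambda>_. {0..c})) (restrict s I) * indicator (PiE K (\<lambda>_. {0..c})) (restrict s K) = (0::real)"
    unfolding indicator_def by auto
  then show ?thesis by (simp add: indicator_def)
qed

lemma prod_split:
  fixes F G :: "(nat list \<Rightarrow> real) \<Rightarrow> complex"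
  assumes IJ: "I \<inter> K = {}" "finite I" "finite K"
    and F: "F \<in> borel_measurable (LB I)" and G: "G \<in> borel_measurable (LB K)"
    and bF: "\<And>s. s \<in> space (LB I) \<Longrightarrow> norm (F s) \<le> indicator (PiE I (\<lambda>_. {0..c})) s"
    and bG: "\<And>s. s \<in> space (LB K) \<Longrightarrow> norm (G s) \<le> indicator (PiE K (\<lambda>_. {0..c})) s"
  shows "(\<integral>s. F (restrict s I) * G (restrict s K) \<partial>LB (I \<union> K)) = (\<integral>s. F s \<partial>LB I) * (\<integral>s. G s \<partial>LB K)"
proof -
  have m: "(\<lambda>s. F (restrict s I) * G (restrict s K)) \<in> borel_measurable (LB (I \<union> K))"
    using measurable_compose[OF measurable_restrict_subset[of I "I \<union> K"] F]
      measurable_compose[OF measurable_restrict_subset[of K "I \<union> K"] G]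
    by (intro borel_measurable_times) auto
  have int: "integrable (LB (I \<union> K)) (\<lambda>s. F (restrict s I) * G (restrict s K))"
  proof (rule integrable_box[OF _ m])
    show "finite (I \<union> K)" using IJ by auto
    fix s assume s: "s \<in> space (LB (I \<union> K))"
    have rI: "restrict s I \<in> space (LB I)" and rJ: "restrict s K \<in> space (LB K)"
      using s unfolding space_LB by auto
    have "norm (F (restrict s I) * G (restrict s K)) = norm (F (restrict s I)) * norm (G (restrict s K))"
      by (simp add: norm_mult)
    also have "\<dots> \<le> indicator (PiE I (\<lambda>_. {0..c})) (restrict s I) * indicator (PiE K (\<lambda>_. {0..c})) (restrict s K)"
      using bF[OF rI] bG[OF rJ] by (intro mult_mono) auto
    also have "\<dots> \<le> indicator (PiE (I \<union> K) (\<lambda>_. {0..c})) s" by (rule box_comb[OF s])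
    finally show "norm (F (restrict s I) * G (restrict s K)) \<le> indicator (PiE (I \<union> K) (\<lambda>_. {0..c})) s" .
  qed
  have "(\<integral>s. F (restrict s I) * G (restrict s K) \<partial>LB (I \<union> K))
      = (\<integral>x. (\<integral>y. F (restrict (merge I K (x, y)) I) * G (restrict (merge I K (x, y)) K) \<partial>LB K) \<partial>LB I)"
    using IJ int by (intro PL.product_integral_fold) auto
  also have "\<dots> = (\<integral>x. F x * (\<integral>y. G y \<partial>LB K) \<partial>LB I)"
  proof (rule Bochner_Integration.integral_cong[OF refl])
    fix x assume x: "x \<in> space (LB I)"
    have "(\<integral>y. F (restrict (merge I K (x, y)) I) * G (restrict (merge I K (x, y)) K) \<partial>LB K)
        = (\<integral>y. F x * G y \<partial>LB K)"
      using IJ(1) x by (intro Bochner_Integration.integral_cong[OF refl]) (simp add: restrict_space_LB)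
    then show "(\<integral>y. F (restrict (merge I K (x, y)) I) * G (restrict (merge I K (x, y)) K) \<partial>LB K)
        = F x * (\<integral>y. G y \<partial>LB K)" by simp
  qed
  also have "\<dots> = (\<integral>s. F s \<partial>LB I) * (\<integral>s. G s \<partial>LB K)" by simp
  finally show ?thesis .
qed




definition NN :: "nat list \<Rightarrow> tree \<Rightarrow> nat list set" where
  "NN \<pi> T = (\<lambda>p. \<pi> @ p) ` inodes T"

lemma finite_inodes: "finite (inodes T)" by (induction T) auto
lemma finite_NN: "finite (NN \<pi> T)" unfolding NN_def by (simp add: finite_inodes)

lemma NN_Leaf: "NN \<pi> Leaf = {}" unfolding NN_def by simp

lemma NN_Node: "NN \<pi> (Node a b c) = insert \<pi> (NN (\<pi>@[0]) a \<union> NN (\<pi>@[1]) b \<union> NN (\<pi>@[2]) c)"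
  unfolding NN_def by (auto simp: image_Un image_image)

lemma NN_prefix: "v \<in> NN \<pi> T \<Longrightarrow> \<exists>p. v = \<pi> @ p" unfolding NN_def by auto

lemma NN_child_form: "v \<in> NN (\<pi>@[i]) T \<Longrightarrow> \<exists>p. v = \<pi> @ i # p" unfolding NN_def by auto

lemma NN_child_notin: "\<pi> \<notin> NN (\<pi>@[i]) T" using NN_child_form by fastforce

lemma NN_child_disj: "i \<noteq> i' \<Longrightarrow> NN (\<pi>@[i]) T \<inter> NN (\<pi>@[i']) T' = {}"
proof (rule ccontr)
  assume "i \<noteq> i'" "NN (\<pi>@[i]) T \<inter> NN (\<pi>@[i']) T' \<noteq> {}"
  then obtain v where "v \<in> NN (\<pi>@[i]) T" "v \<in> NN (\<pi>@[i']) T'" by auto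
  then obtain p p' where "v = \<pi> @ i # p" "v = \<pi> @ i' # p'" using NN_child_form by metis
  then show False using \<open>i \<noteq> i'\<close> by auto
qed

lemma NN_child_desc: "v \<in> NN (\<pi>@[i]) T \<Longrightarrow> desc v \<pi>"
  unfolding desc_def using NN_child_form by fastforce

lemma desc_child_same:
  assumes "v \<in> NN (\<pi>@[i]) T" "w \<in> NN (\<pi>@[i']) T'" "desc v w"
  shows "i = i'"
  using assms NN_child_form[OF assms(1)] NN_child_form[OF assms(2)] unfolding desc_def by fastforce

lemma desc_not_root:
  assumes "w \<in> NN \<pi> T" shows "\<not> desc \<pi> w"
  using NN_prefix[OF assms] unfolding desc_def by auto

lemma RR_Node:
  fixes \<pi> a b c
  defines "Na \<equiv> NN (\<pi>@[0]) a" and "Nb \<equiv> NN (\<pi>@[1]) b" and "Nc \<equiv> NN (\<pi>@[2]) c"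
  assumes s: "s \<in> NN \<pi> (Node a b c) \<rightarrow>\<^sub>E UNIV"
  shows "s \<in> RR (NN \<pi> (Node a b c)) t \<longleftrightarrow> (0 \<le> s \<pi> \<and> s \<pi> \<le> t) \<and> restrict s Na \<in> RR Na (s \<pi>)
      \<and> restrict s Nb \<in> RR Nb (s \<pi>) \<and> restrict s Nc \<in> RR Nc (s \<pi>)"
proof -
  have N: "NN \<pi> (Node a b c) = insert \<pi> (Na \<union> Nb \<union> Nc)" unfolding Na_def Nb_def Nc_def NN_Node ..
  have dA: "desc v \<pi>" if "v \<in> Na \<union> Nb \<union> Nc" for v
    using that NN_child_desc unfolding Na_def Nb_def Nc_def by blast
  have nr: "\<not> desc \<pi> w" if "w \<in> NN \<pi> (Node a b c)" for w using desc_not_root[OF that] .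
  have same: "(v \<in> Na \<and> w \<in> Na) \<or> (v \<in> Nb \<and> w \<in> Nb) \<or> (v \<in> Nc \<and> w \<in> Nc)"
    if "v \<in> Na \<union> Nb \<union> Nc" "w \<in> Na \<union> Nb \<union> Nc" "desc v w" for v w
    using that desc_child_same[of v \<pi> _ _ w] unfolding Na_def Nb_def Nc_def by fastforce
  show ?thesis
  proof
    assume r: "s \<in> RR (NN \<pi> (Node a b c)) t"
    then have r1: "\<forall>v\<in>insert \<pi> (Na \<union> Nb \<union> Nc). 0 \<le> s v \<and> s v \<le> t"
      and r2: "\<forall>v\<in>insert \<pi> (Na \<union> Nb \<union> Nc). \<forall>w\<in>insert \<pi> (Na \<union> Nb \<union> Nc). desc v w \<longrightarrow> s v \<le> s w"
      unfolding RR_def N by auto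
    have "restrict s X \<in> RR X (s \<pi>)" if X: "X \<subseteq> Na \<union> Nb \<union> Nc" for X
      unfolding RR_def
    proof (intro CollectI conjI ballI impI)
      show "restrict s X \<in> X \<rightarrow>\<^sub>E UNIV" by simp
      fix v assume v: "v \<in> X"
      then have v': "v \<in> insert \<pi> (Na \<union> Nb \<union> Nc)" using X by blast
      show "0 \<le> restrict s X v" using r1 v' v by auto
      show "restrict s X v \<le> s \<pi>" using r2 v' dA[of v] v X by auto
      fix w assume w: "w \<in> X" and d: "desc v w"
      then have w': "w \<in> insert \<pi> (Na \<union> Nb \<union> Nc)" using X by blast
      have "s v \<le> s w" using r2 v' w' d by blast
      then show "restrict s X v \<le> restrict s X w" using v w by simp
    qed
    then show "(0 \<le> s \<pi> \<and> s \<pi> \<le> t) \<and> restrict s Na \<in> RR Na (s \<pi>)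
      \<and> restrict s Nb \<in> RR Nb (s \<pi>) \<and> restrict s Nc \<in> RR Nc (s \<pi>)" using r1 by auto
  next
    assume r: "(0 \<le> s \<pi> \<and> s \<pi> \<le> t) \<and> restrict s Na \<in> RR Na (s \<pi>)
      \<and> restrict s Nb \<in> RR Nb (s \<pi>) \<and> restrict s Nc \<in> RR Nc (s \<pi>)"
    have box: "\<forall>v\<in>X. 0 \<le> s v \<and> s v \<le> s \<pi>" and ord: "\<forall>v\<in>X. \<forall>w\<in>X. desc v w \<longrightarrow> s v \<le> s w"
      if "X \<in> {Na, Nb, Nc}" for X
      using r that unfolding RR_def by (auto simp: restrict_def)
    show "s \<in> RR (NN \<pi> (Node a b c)) t"
      unfolding RR_def
    proof (intro CollectI conjI ballI impI)
      show "s \<in> NN \<pi> (Node a b c) \<rightarrow>\<^sub>E UNIV" by fact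
      fix v assume v: "v \<in> NN \<pi> (Node a b c)"
      then have "v = \<pi> \<or> v \<in> Na \<or> v \<in> Nb \<or> v \<in> Nc" unfolding N by auto
      then show "0 \<le> s v" "s v \<le> t" using box[of Na] box[of Nb] box[of Nc] r by auto
      fix w assume w: "w \<in> NN \<pi> (Node a b c)" and d: "desc v w"
      have vr: "v \<noteq> \<pi>" using nr[OF w] d by auto
      then have v': "v \<in> Na \<union> Nb \<union> Nc" using v unfolding N by auto
      show "s v \<le> s w"
      proof (cases "w = \<pi>")
        case True then show ?thesis using v' box[of Na] box[of Nb] box[of Nc] by auto
      next
        case False
        then have "w \<in> Na \<union> Nb \<union> Nc" using w unfolding N by auto
        from same[OF v' this d] show ?thesis using ord[of Na] ord[of Nb] ord[of Nc] d by auto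
      qed
    qed
  qed
qed

lemma CC_restrict: "CC j X (restrict s X) = CC j X s"
  unfolding CC_def by (rule prod.cong) auto

lemma CC_Node:
  "CC j (NN \<pi> (Node a b c)) s = ee (of_int (sigmaT j \<pi>)) (s \<pi>) *
     (CC j (NN (\<pi>@[0]) a) (restrict s (NN (\<pi>@[0]) a)) * CC j (NN (\<pi>@[1]) b) (restrict s (NN (\<pi>@[1]) b))
      * CC j (NN (\<pi>@[2]) c) (restrict s (NN (\<pi>@[2]) c)))"
proof -
  let ?f = "\<lambda>v. exp (\<i> * of_real (of_int (sigmaT j v) * s v))"
  have d1: "NN (\<pi>@[0]) a \<inter> NN (\<pi>@[1]) b = {}" by (rule NN_child_disj) simp
  have d2: "(NN (\<pi>@[0]) a \<union> NN (\<pi>@[1]) b) \<inter> NN (\<pi>@[2]) c = {}"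
    using NN_child_disj[of 0 2 \<pi> a c] NN_child_disj[of 1 2 \<pi> b c] by auto
  have ni: "\<pi> \<notin> NN (\<pi>@[0]) a \<union> NN (\<pi>@[1]) b \<union> NN (\<pi>@[2]) c" using NN_child_notin by auto
  have "CC j (NN \<pi> (Node a b c)) s = ?f \<pi> * (prod ?f (NN (\<pi>@[0]) a) * prod ?f (NN (\<pi>@[1]) b) * prod ?f (NN (\<pi>@[2]) c))"
    unfolding CC_def NN_Node using ni d1 d2
    by (simp add: finite_NN prod.union_disjoint)
  then show ?thesis unfolding CC_restrict by (simp add: CC_def ee_def)
qed

lemma FF_Node:
  assumes s: "s \<in> NN \<pi> (Node a b c) \<rightarrow>\<^sub>E UNIV"
  shows "FF j (NN \<pi> (Node a b c)) t s = indicator {0..t} (s \<pi>) *\<^sub>R (ee (of_int (sigmaT j \<pi>)) (s \<pi>) *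
     (FF j (NN (\<pi>@[0]) a) (s \<pi>) (restrict s (NN (\<pi>@[0]) a)) * FF j (NN (\<pi>@[1]) b) (s \<pi>) (restrict s (NN (\<pi>@[1]) b))
      * FF j (NN (\<pi>@[2]) c) (s \<pi>) (restrict s (NN (\<pi>@[2]) c))))"
proof -
  have "indicator (RR (NN \<pi> (Node a b c)) t) s = (indicator {0..t} (s \<pi>) *
      (indicator (RR (NN (\<pi>@[0]) a) (s \<pi>)) (restrict s (NN (\<pi>@[0]) a)) *
       indicator (RR (NN (\<pi>@[1]) b) (s \<pi>)) (restrict s (NN (\<pi>@[1]) b)) *
       indicator (RR (NN (\<pi>@[2]) c) (s \<pi>)) (restrict s (NN (\<pi>@[2]) c))) :: real)"
    using RR_Node[OF s, of t] by (auto simp: indicator_def)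
  then show ?thesis unfolding FF_def CC_Node
    by (simp add: scaleR_conv_of_real mult_ac)
qed




fun lbl :: "tree \<Rightarrow> (nat list \<Rightarrow> int) \<Rightarrow> nat list \<Rightarrow> ltree" where
  "lbl Leaf j \<pi> = LL"
| "lbl (Node a b c) j \<pi> = LN (of_int (sigmaT j \<pi>)) (\<lambda>_. 1) 0 (lbl a j (\<pi>@[0])) (lbl b j (\<pi>@[1])) (lbl c j (\<pi>@[2]))"

lemma wf_lbl: "wft (lbl T j \<pi>)"
  by (induction T arbitrary: \<pi>) (auto intro: amp_const)

lemma prod_meas:
  fixes F G :: "(nat list \<Rightarrow> real) \<Rightarrow> complex"
  assumes F: "F \<in> borel_measurable (LB I)" and G: "G \<in> borel_measurable (LB K)"
  shows "(\<lambda>s. F (restrict s I) * G (restrict s K)) \<in> borel_measurable (LB (I \<union> K))"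
  using measurable_compose[OF measurable_restrict_subset[of I "I \<union> K"] F]
      measurable_compose[OF measurable_restrict_subset[of K "I \<union> K"] G]
  by (intro borel_measurable_times) auto

lemma prod_box:
  fixes F G :: "(nat list \<Rightarrow> real) \<Rightarrow> complex"
  assumes bF: "\<And>s. s \<in> space (LB I) \<Longrightarrow> norm (F s) \<le> indicator (PiE I (\<lambda>_. {0..c})) s"
    and bG: "\<And>s. s \<in> space (LB K) \<Longrightarrow> norm (G s) \<le> indicator (PiE K (\<lambda>_. {0..c})) s"
    and s: "s \<in> space (LB (I \<union> K))"
  shows "norm (F (restrict s I) * G (restrict s K)) \<le> indicator (PiE (I \<union> K) (\<lambda>_. {0..c})) s"
proof -
  have rI: "restrict s I \<in> space (LB I)" and rJ: "restrict s K \<in> space (LB K)"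
    using s unfolding space_LB by auto
  have "norm (F (restrict s I) * G (restrict s K)) = norm (F (restrict s I)) * norm (G (restrict s K))"
    by (simp add: norm_mult)
  also have "\<dots> \<le> indicator (PiE I (\<lambda>_. {0..c})) (restrict s I) * indicator (PiE K (\<lambda>_. {0..c})) (restrict s K)"
    using bF[OF rI] bG[OF rJ] by (intro mult_mono) auto
  also have "\<dots> \<le> indicator (PiE (I \<union> K) (\<lambda>_. {0..c})) s" by (rule box_comb[OF s])
  finally show ?thesis .
qed

lemma II_Leaf: "II j (NN \<pi> Leaf) t = 1"
proof -
  have "(\<lambda>_. undefined) \<in> RR {} t" unfolding RR_def by auto
  then show ?thesis unfolding II_def NN_Leaf PiM_empty
    by (simp add: lebesgue_integral_count_space_finite FF_def CC_def)
qed

lemma inner_int: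
  fixes u :: real and \<pi> a b c
  defines "Na \<equiv> NN (\<pi>@[0]) a" and "Nb \<equiv> NN (\<pi>@[1]) b" and "Nc \<equiv> NN (\<pi>@[2]) c"
  shows "(\<integral>y. FF j Na u (restrict y Na) * (FF j Nb u (restrict y Nb) * FF j Nc u (restrict y Nc)) \<partial>LB (Na \<union> Nb \<union> Nc))
     = II j Na u * (II j Nb u * II j Nc u)"
proof -
  have fin: "finite Na" "finite Nb" "finite Nc" unfolding Na_def Nb_def Nc_def by (auto simp: finite_NN)
  have dbc: "Nb \<inter> Nc = {}" unfolding Nb_def Nc_def by (rule NN_child_disj) simp
  have dabc: "Na \<inter> (Nb \<union> Nc) = {}" unfolding Na_def Nb_def Nc_def
    using NN_child_disj[of 0 1 \<pi> a b] NN_child_disj[of 0 2 \<pi> a c] by auto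
  let ?H = "\<lambda>z. FF j Nb u (restrict z Nb) * FF j Nc u (restrict z Nc)"
  have Hm: "?H \<in> borel_measurable (LB (Nb \<union> Nc))" using fin by (intro prod_meas FF_meas)
  have Hb: "norm (?H z) \<le> indicator (PiE (Nb \<union> Nc) (\<lambda>_. {0..\<bar>u\<bar>})) z" if "z \<in> space (LB (Nb \<union> Nc))" for z
    using that by (intro prod_box FF_box)
  have "(\<integral>y. FF j Na u (restrict y Na) * (FF j Nb u (restrict y Nb) * FF j Nc u (restrict y Nc)) \<partial>LB (Na \<union> Nb \<union> Nc))
     = (\<integral>y. FF j Na u (restrict y Na) * ?H (restrict y (Nb \<union> Nc)) \<partial>LB (Na \<union> (Nb \<union> Nc)))"
    by (simp add: Un_assoc)
  also have "\<dots> = II j Na u * (\<integral>z. ?H z \<partial>LB (Nb \<union> Nc))"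
    unfolding II_def using dabc fin
    by (intro prod_split[where c="\<bar>u\<bar>"] FF_meas Hm FF_box Hb) auto
  also have "(\<integral>z. ?H z \<partial>LB (Nb \<union> Nc)) = II j Nb u * II j Nc u"
    unfolding II_def using dbc fin
    by (intro prod_split[where c="\<bar>u\<bar>"] FF_meas FF_box) auto
  finally show ?thesis .
qed

lemma bridge: "0 \<le> t \<Longrightarrow> t \<le> 1 \<Longrightarrow> II j (NN \<pi> T) t = J (lbl T j \<pi>) t"
proof (induction T arbitrary: \<pi> t)
  case Leaf then show ?case by (simp add: II_Leaf)
next
  case (Node a b c)
  define Na where "Na = NN (\<pi>@[0]) a"
  define Nb where "Nb = NN (\<pi>@[1]) b"
  define Nc where "Nc = NN (\<pi>@[2]) c"
  define M where "M = Na \<union> Nb \<union> Nc"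
  define N where "N = NN \<pi> (Node a b c)"
  define \<sigma> where "\<sigma> = (of_int (sigmaT j \<pi>) :: real)"
  have NM: "N = {\<pi>} \<union> M" unfolding N_def M_def Na_def Nb_def Nc_def NN_Node by auto
  have piM: "{\<pi>} \<inter> M = {}" unfolding M_def Na_def Nb_def Nc_def using NN_child_notin by auto
  have finM: "finite M" unfolding M_def Na_def Nb_def Nc_def by (auto simp: finite_NN)
  define g where "g u = ee \<sigma> u * 1 * J (lbl a j (\<pi>@[0])) u * J (lbl b j (\<pi>@[1])) u * J (lbl c j (\<pi>@[2])) u" for u
  define \<Psi> where "\<Psi> u = indicator {0..t} u *\<^sub>R g u" for u
  have int_N: "integrable (LB N) (FF j N t)"
    unfolding N_def by (rule integrable_box[where c="\<bar>t\<bar>"]) (auto simp: finite_NN intro: FF_meas FF_box)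
  have "II j N t = (\<integral>x. (\<integral>y. FF j N t (merge {\<pi>} M (x, y)) \<partial>LB M) \<partial>LB {\<pi>})"
    unfolding II_def using int_N piM finM by (subst NM, intro PL.product_integral_fold) (auto simp: NM)
  also have "\<dots> = (\<integral>x. \<Psi> (x \<pi>) \<partial>LB {\<pi>})"
  proof (rule Bochner_Integration.integral_cong[OF refl])
    fix x assume x: "x \<in> space (LB {\<pi>})"
    let ?u = "x \<pi>"
    have "(\<integral>y. FF j N t (merge {\<pi>} M (x, y)) \<partial>LB M) = (\<integral>y. indicator {0..t} ?u *\<^sub>R (ee \<sigma> ?u *
        (FF j Na ?u (restrict y Na) * (FF j Nb ?u (restrict y Nb) * FF j Nc ?u (restrict y Nc)))) \<partial>LB M)"
    proof (rule Bochner_Integration.integral_cong[OF refl])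
      fix y assume y: "y \<in> space (LB M)"
      let ?s = "merge {\<pi>} M (x, y)"
      have sN: "?s \<in> NN \<pi> (Node a b c) \<rightarrow>\<^sub>E UNIV" using NM unfolding N_def by (auto simp: merge_def PiE_def extensional_def)
      have s\<pi>: "?s \<pi> = x \<pi>" by (simp add: merge_def)
      have rX: "restrict ?s X = restrict y X" if "X \<subseteq> M" for X
        using that piM by (auto simp: merge_def restrict_def fun_eq_iff)
      have sub: "Na \<subseteq> M" "Nb \<subseteq> M" "Nc \<subseteq> M" unfolding M_def by auto
      show "FF j N t ?s = indicator {0..t} ?u *\<^sub>R (ee \<sigma> ?u *
        (FF j Na ?u (restrict y Na) * (FF j Nb ?u (restrict y Nb) * FF j Nc ?u (restrict y Nc))))"
        unfolding N_def FF_Node[OF sN] s\<pi> using rX[OF sub(1)] rX[OF sub(2)] rX[OF sub(3)]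
        by (simp add: Na_def Nb_def Nc_def \<sigma>_def mult_ac)
    qed
    also have "\<dots> = indicator {0..t} ?u *\<^sub>R (ee \<sigma> ?u * (II j Na ?u * (II j Nb ?u * II j Nc ?u)))"
      unfolding M_def Na_def Nb_def Nc_def by (simp only: integral_scaleR_right integral_mult_right_zero inner_int)
    also have "\<dots> = \<Psi> ?u"
    proof (cases "?u \<in> {0..t}")
      case True
      then have "0 \<le> ?u" "?u \<le> 1" using Node.prems by auto
      then show ?thesis unfolding \<Psi>_def g_def Na_def Nb_def Nc_def using Node.IH by simp
    qed (simp add: \<Psi>_def)
    finally show "(\<integral>y. FF j N t (merge {\<pi>} M (x, y)) \<partial>LB M) = \<Psi> ?u" .
  qed
  also have "\<dots> = (\<integral>u. \<Psi> u \<partial>lborel)"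
  proof -
    have gc: "continuous_on {0..t} g"
    proof -
      have "continuous_on {0..1} g" unfolding g_def using J_cont[OF wf_lbl] ee_cont by (intro continuous_intros) auto
      then show ?thesis by (rule continuous_on_subset) (use Node.prems in auto)
    qed
    have "integrable lborel \<Psi>" unfolding \<Psi>_def by (intro borel_integrable_compact gc) auto
    then show ?thesis by (intro PL.product_integral_singleton) auto
  qed
  also have "\<dots> = integral {0..t} g"
  proof -
    have gc: "continuous_on {0..t} g"
    proof -
      have "continuous_on {0..1} g" unfolding g_def using J_cont[OF wf_lbl] ee_cont by (intro continuous_intros) auto
      then show ?thesis by (rule continuous_on_subset) (use Node.prems in auto)
    qed
    have si: "set_integrable lborel {0..t} g" unfolding set_integrable_def
      by (intro borel_integrable_compact gc) auto
    show ?thesis using set_borel_integral_eq_integral(2)[OF si] unfolding set_lebesgue_integral_def \<Psi>_def .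
  qed
  also have "\<dots> = J (lbl (Node a b c) j \<pi>) t" unfolding g_def \<sigma>_def by simp
  finally show ?case unfolding N_def .
qed




lemma qq_scale:
  assumes "0 \<le> t" "t \<le> 1"
  shows "t / qq (t * x) \<le> sqrt t / qq x"
proof -
  have a: "sqrt t * qq x \<le> qq (t * x)"
  proof -
    have "(sqrt t * qq x)^4 = t^2 * (1 + x^2)"
      using assms by (simp add: power_mult_distrib qq_4 power2_eq_square[symmetric])
        (metis power2_eq_square real_sqrt_pow2 power_mult power_even_eq numeral_Bit0 mult_2)
    also have "\<dots> \<le> 1 + (t*x)^2"
    proof -
      have "t^2 \<le> 1" using assms by (simp add: power_le_one)
      then show ?thesis by (simp add: power_mult_distrib algebra_simps)
    qed
    also have "\<dots> = (qq (t*x))^4" by (simp add: qq_4)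
    finally have "(sqrt t * qq x)^4 \<le> (qq (t*x))^4" .
    moreover have "0 \<le> sqrt t * qq x" "0 \<le> qq (t*x)" using assms qq_pos[of x] qq_pos[of "t*x"] by auto
    ultimately show ?thesis using power_mono_iff[of "sqrt t * qq x" "qq (t*x)" 4] by simp
  qed
  have "t * qq x = sqrt t * (sqrt t * qq x)" using assms by (simp add: real_sqrt_mult_self mult.assoc[symmetric])
  also have "\<dots> \<le> sqrt t * qq (t * x)" using a assms by (intro mult_left_mono) auto
  finally have "t * qq x \<le> sqrt t * qq (t*x)" .
  then show ?thesis using qq_pos[of x] qq_pos[of "t*x"] by (simp add: divide_simps mult.commute)
qed

lemma Bd_lbl:
  assumes "0 \<le> t" "t \<le> 1"
  shows "Bd t (lbl T j \<pi>) \<le> (\<Prod>v\<in>NN \<pi> T. 5 * sqrt t / qq (of_int (sigmaT j v)))"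
proof (induction T arbitrary: \<pi>)
  case Leaf then show ?case by (simp add: NN_Leaf)
next
  case (Node a b c)
  let ?f = "\<lambda>v. 5 * sqrt t / qq (of_int (sigmaT j v))"
  have d1: "NN (\<pi>@[0]) a \<inter> NN (\<pi>@[1]) b = {}" by (rule NN_child_disj) simp
  have d2: "(NN (\<pi>@[0]) a \<union> NN (\<pi>@[1]) b) \<inter> NN (\<pi>@[2]) c = {}"
    using NN_child_disj[of 0 2 \<pi> a c] NN_child_disj[of 1 2 \<pi> b c] by auto
  have ni: "\<pi> \<notin> NN (\<pi>@[0]) a \<union> NN (\<pi>@[1]) b \<union> NN (\<pi>@[2]) c" using NN_child_notin by auto
  have P: "(\<Prod>v\<in>NN \<pi> (Node a b c). ?f v) = ?f \<pi> * (prod ?f (NN (\<pi>@[0]) a)) * (prod ?f (NN (\<pi>@[1]) b)) * (prod ?f (NN (\<pi>@[2]) c))"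
    unfolding NN_Node using ni d1 d2 by (simp add: finite_NN prod.union_disjoint mult_ac)
  have h: "5 * t / qq (t * of_int (sigmaT j \<pi>)) \<le> ?f \<pi>"
    using mult_left_mono[OF qq_scale[OF assms, of "of_int (sigmaT j \<pi>)"], of 5] by simp
  have nn: "0 \<le> Bd t X" for X using assms Bd_nonneg by auto
  have "Bd t (lbl (Node a b c) j \<pi>) = 5 * t / qq (t * of_int (sigmaT j \<pi>)) * Bd t (lbl a j (\<pi>@[0]))
      * Bd t (lbl b j (\<pi>@[1])) * Bd t (lbl c j (\<pi>@[2]))" by simp
  also have "\<dots> \<le> ?f \<pi> * (prod ?f (NN (\<pi>@[0]) a)) * (prod ?f (NN (\<pi>@[1]) b)) * (prod ?f (NN (\<pi>@[2]) c))"
  proof -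
    have fnn: "0 \<le> ?f v" for v using assms qq_pos[of "of_int (sigmaT j v)"] by auto
    have pnn: "0 \<le> prod ?f X" for X by (rule prod_nonneg) (use fnn in auto)
    have b0: "0 \<le> 5 * t / qq (t * of_int (sigmaT j \<pi>))" using assms qq_pos[of "t * of_int (sigmaT j \<pi>)"] by auto
    show ?thesis
      by (intro mult_mono mult_nonneg_nonneg h Node.IH nn fnn pnn b0)
  qed
  finally show ?case unfolding P .
qed




lemma jbr_powr: "jbr x powr (-1/2) = 1 / qq x"
proof -
  have "jbr x powr (-1/2) = 1 / (jbr x powr (1/2))" by (simp add: powr_minus_divide[symmetric])
  also have "\<dots> = 1 / qq x" unfolding qq_def using jbr_pos[of x] by (simp add: powr_half_sqrt)
  finally show ?thesis .
qed

lemma jbr_powr': "jbr x powr - (1/2) = 1 / qq x" using jbr_powr[of x] by simp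

lemma sqrt25: "sqrt ((25 * t) ^ n) = (5 * sqrt t) ^ n"
proof -
  have "sqrt 25 = (5::real)" by (rule real_sqrt_unique) auto
  then show ?thesis by (simp add: real_sqrt_power real_sqrt_mult)
qed

lemma NN_nil: "NN [] T = inodes T" unfolding NN_def by simp

theorem lemma3p2:
  shows "\<exists>C::real. C > 0 \<and> (\<forall>T j t. j \<in> JT T \<longrightarrow> 0 \<le> t \<longrightarrow> t \<le> 1 \<longrightarrow>
     norm (IT T t j) \<le> sqrt ((C * t) ^ card (inodes T)) *
       (\<Prod>v\<in>inodes T. jbr (real_of_int (sigmaT j v)) powr (-1/2)))"
proof (intro exI[of _ 25] conjI allI impI)
  fix T j and t :: real assume t: "0 \<le> t" "t \<le> 1"
  have "IT T t j = J (lbl T j []) t"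
    unfolding IT_II using bridge[OF t, of j "[]" T] by (simp add: NN_nil)
  then have "norm (IT T t j) \<le> Bd t (lbl T j [])" using J_bound[OF wf_lbl t] by simp
  also have "\<dots> \<le> (\<Prod>v\<in>inodes T. 5 * sqrt t / qq (of_int (sigmaT j v)))"
    using Bd_lbl[OF t, of T j "[]"] by (simp add: NN_nil)
  also have "\<dots> = (\<Prod>v\<in>inodes T. (5 * sqrt t) * jbr (real_of_int (sigmaT j v)) powr (-1/2))"
    by (simp add: jbr_powr')
  also have "\<dots> = (5 * sqrt t) ^ card (inodes T) * (\<Prod>v\<in>inodes T. jbr (real_of_int (sigmaT j v)) powr (-1/2))"
    by (simp only: prod.distrib prod_constant power_mult_distrib)
  also have "\<dots> = sqrt ((25 * t) ^ card (inodes T)) * (\<Prod>v\<in>inodes T. jbr (real_of_int (sigmaT j v)) powr (-1/2))"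
    by (simp only: sqrt25)
  finally show "norm (IT T t j) \<le> sqrt ((25 * t) ^ card (inodes T)) *
       (\<Prod>v\<in>inodes T. jbr (real_of_int (sigmaT j v)) powr (-1/2))" .
qed simp


end
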